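(* Let $\mathbf{f} = (f_n)_{n\ge 1}$ be the ordinary paperfolding word over $\{0,1\}$ and let $\rho(n)$ be its abelian complexity function. Then for all integers $n\ge 0$ (with $n\ge1$ in the first relation) the following hold: \begin{align*} \rho(4n) &= \rho(2n),\\ \rho(4n+2) &= \rho(2n+1)+1,\\ \rho(16n+1) &= \rho(8n+1),\\ \rho(16n+c) &= \rho(2n+1)+2 \quad\text{for each } c\in\{3,7,9,13\},\\ \rho(16n+5) &= \rho(4n+1)+2,\\ \rho(16n+11) &= \rho(4n+3)+2,\\ \rho(16n+15) &= \rho(2n+2)+1. \end{align*}
   Context: The ordinary paperfolding word $\mathbf{f}=(f_n)_{n\ge1}$ over $\{0,1\}$ is defined as follows: for $n\ge 1$ write $n=n'2^k$ with $n'$ odd; then $f_n=0$ if $n'\equiv 1 \pmod 4$ and $f_n=1$ if $n'\equiv 3\pmod 4$. Thus $\mathbf{f}=0010011000110110\cdots$. A factor of $\mathbf{f}$ is a finite contiguous block $f_i f_{i+1}\cdots f_{i+n-1}$. Two words $u,v$ over $\{0,1\}$ are abelian equivalent if one is a rearrangement of the other. For $n\ge1$, the abelian complexity $\rho(n)$ is the number of abelian equivalence classes among the factors of $\mathbf{f}$ of length $n$. *)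

theory Defs
  imports Main "HOL-Library.Multiset"
begin

fun oddpart :: "nat \<Rightarrow> nat" where
  "oddpart n = (if n = 0 then 0 else if even n then oddpart (n div 2) else n)"

(* ordinary paperfolding word f_n, n \<ge> 1 (f_0 unused) *)
definition pf :: "nat \<Rightarrow> nat" where
  "pf n = (if oddpart n mod 4 = 1 then 0 else 1)"

definition pf_factor :: "nat \<Rightarrow> nat \<Rightarrow> nat list" where
  "pf_factor i m = map pf [i..<i+m]"

definition pf_factors :: "nat \<Rightarrow> nat list set" where
  "pf_factors m = {pf_factor i m | i. i \<ge> 1}"

definition abelian_equiv :: "'a list \<Rightarrow> 'a list \<Rightarrow> bool" where
  "abelian_equiv u v \<longleftrightarrow> mset u = mset v"

definition rho :: "nat \<Rightarrow> nat" where
  "rho m = card ((\<lambda>w. {v \<in> pf_factors m. abelian_equiv w v}) ` pf_factors m)"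

end

theory Submission imports Defs begin

definition sg :: "bool \<Rightarrow> int" where "sg t = (if t then 1 else -1)"

definition H2 :: "bool \<Rightarrow> int \<times> int \<Rightarrow> bool \<Rightarrow> int \<times> int" where
  "H2 t p b = (if b then (max (fst p + sg t) (snd p - sg t), max (fst p - sg t) (snd p + sg t))
               else (max (fst p) (snd p), max (fst p) (snd p)))"

definition Ho :: "bool \<Rightarrow> int \<times> int \<Rightarrow> int \<times> int \<Rightarrow> bool \<Rightarrow> int \<times> int" where
  "Ho t p q b = (if b then (max (fst p) (snd p), max (fst q - sg t) (snd q + sg t))
               else (max (fst p + sg t) (snd p - sg t), max (fst q) (snd q)))"

function H :: "bool \<Rightarrow> nat \<Rightarrow> int \<times> int" where
  "H t n = (if n = 0 then (0,0) else if n = 1 then (1,1)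
     else if even n then H2 t (H t (n div 2)) (odd (n div 2))
     else Ho t (H t (n div 2)) (H t (n div 2 + 1)) (odd (n div 2)))"
  by pat_completeness auto
termination by (relation "measure (\<lambda>(t,n). n)") (auto elim: oddE)

declare H.simps[simp del]

lemma H_0: "H t 0 = (0,0)" by (simp add: H.simps)
lemma H_1: "H t 1 = (1,1)" by (simp add: H.simps)
lemma H_Suc0: "H t (Suc 0) = (1,1)" by (simp add: H.simps)

lemma H_even: "H t (2*k) = H2 t (H t k) (odd k)"
proof (cases "k = 0")
  case True thus ?thesis by (simp add: H_0 H2_def)
next
  case False thus ?thesis by (subst H.simps) simp
qed

lemma H_odd: "H t (2*k+1) = Ho t (H t k) (H t (k+1)) (odd k)"
proof (cases "k = 0")
  case True thus ?thesis by (simp add: H_0 H_Suc0 Ho_def sg_def)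
next
  case False thus ?thesis by (subst H.simps) simp
qed

fun up :: "bool \<Rightarrow> bool \<Rightarrow> (int \<times> int) list \<Rightarrow> (int \<times> int) list" where
  "up t b [] = []"
| "up t b [p] = [H2 t p b]"
| "up t b (p#q#r) = H2 t p b # Ho t p q b # up t (\<not> b) (q#r)"

lemma win: "map (H t) [2*N..<2*N+2*L+1] = up t (odd N) (map (H t) [N..<N+L+1])"
proof (induction L arbitrary: N)
  case 0
  then show ?case by (simp add: H_even)
next
  case (Suc L)
  have a: "[2*N..<2*N+2*Suc L+1] = 2*N # (2*N+1) # [2*(N+1)..<2*(N+1)+2*L+1]"
    by (simp add: upt_conv_Cons del: upt_Suc)
  have b: "[N..<N+Suc L+1] = N # [N+1..<(N+1)+L+1]"
    by (simp add: upt_conv_Cons del: upt_Suc)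
  have c: "[N+1..<(N+1)+L+1] = (N+1) # [N+2..<(N+1)+L+1]"
    by (simp add: upt_conv_Cons del: upt_Suc)
  have o: "odd (N+1) = (\<not> odd N)" by simp
  have "up t (odd N) (map (H t) [N..<N+Suc L+1]) = H2 t (H t N) (odd N) # Ho t (H t N) (H t (N+1)) (odd N) # up t (odd (N+1)) (map (H t) [N+1..<(N+1)+L+1])"
    by (simp only: b c o list.map up.simps)
  also have "... = H t (2*N) # H t (2*N+1) # map (H t) [2*(N+1)..<2*(N+1)+2*L+1]"
    by (simp only: Suc.IH H_even H_odd)
  also have "... = map (H t) [2*N..<2*N+2*Suc L+1]"
    by (simp only: a list.map)
  finally show ?case by simp
qed

definition tr :: "int \<Rightarrow> int \<times> int \<Rightarrow> int \<times> int" where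
  "tr x p = (x + fst p, x + snd p)"

lemma H2_tr: "H2 t (tr x p) b = tr x (H2 t p b)"
  by (cases b) (simp_all add: H2_def tr_def max_add_distrib_right algebra_simps)
lemma Ho_tr: "Ho t (tr x p) (tr x q) b = tr x (Ho t p q b)"
  by (cases b) (simp_all add: Ho_def tr_def max_add_distrib_right algebra_simps)

lemma up_tr: "up t b (map (tr x) w) = map (tr x) (up t b w)"
  by (induction t b w rule: up.induct) (auto simp: H2_tr Ho_tr)

definition ok :: "int \<times> int \<Rightarrow> int \<times> int \<Rightarrow> bool" where
  "ok p q \<longleftrightarrow> (snd p - fst p, fst q - fst p, snd q - fst p) \<in>
     {(-2,-1,-1),(0,-1,-1),(0,-1,1),(0,1,-1),(0,1,1),(2,1,1)}"

definition shapes :: "(int \<times> int) list list" where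
  "shapes = [[(0,-2),(-1,-1)],[(0,0),(-1,-1)],[(0,0),(-1,1)],[(0,0),(1,-1)],[(0,0),(1,1)],[(0,2),(1,1)]]"

lemma ok_shape: assumes "ok p q" shows "\<exists>sh\<in>set shapes. [p,q] = map (tr (fst p)) sh"
proof -
  obtain a b where p: "p = (a,b)" by (cases p)
  obtain c d where q: "q = (c,d)" by (cases q)
  have m: "(b-a, c-a, d-a) \<in> {(-2,-1,-1),(0,-1,-1),(0,-1,1),(0,1,-1),(0,1,1),(2,1,1)}"
    using assms by (simp add: ok_def p q)
  { assume h: "(b-a, c-a, d-a) = (-2,-1,-1)"
    have "[p,q] = map (tr (fst p)) [(0,-2),(-1,-1)]" using h by (simp add: p q tr_def)
    moreover have "[(0,-2),(-1,-1)] \<in> set shapes" by (simp add: shapes_def)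
    ultimately have ?thesis by (rule bexI) }
  moreover
  { assume h: "(b-a, c-a, d-a) = (0,-1,-1)"
    have "[p,q] = map (tr (fst p)) [(0,0),(-1,-1)]" using h by (simp add: p q tr_def)
    moreover have "[(0,0),(-1,-1)] \<in> set shapes" by (simp add: shapes_def)
    ultimately have ?thesis by (rule bexI) }
  moreover
  { assume h: "(b-a, c-a, d-a) = (0,-1,1)"
    have "[p,q] = map (tr (fst p)) [(0,0),(-1,1)]" using h by (simp add: p q tr_def)
    moreover have "[(0,0),(-1,1)] \<in> set shapes" by (simp add: shapes_def)
    ultimately have ?thesis by (rule bexI) }
  moreover
  { assume h: "(b-a, c-a, d-a) = (0,1,-1)"
    have "[p,q] = map (tr (fst p)) [(0,0),(1,-1)]" using h by (simp add: p q tr_def)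
    moreover have "[(0,0),(1,-1)] \<in> set shapes" by (simp add: shapes_def)
    ultimately have ?thesis by (rule bexI) }
  moreover
  { assume h: "(b-a, c-a, d-a) = (0,1,1)"
    have "[p,q] = map (tr (fst p)) [(0,0),(1,1)]" using h by (simp add: p q tr_def)
    moreover have "[(0,0),(1,1)] \<in> set shapes" by (simp add: shapes_def)
    ultimately have ?thesis by (rule bexI) }
  moreover
  { assume h: "(b-a, c-a, d-a) = (2,1,1)"
    have "[p,q] = map (tr (fst p)) [(0,2),(1,1)]" using h by (simp add: p q tr_def)
    moreover have "[(0,2),(1,1)] \<in> set shapes" by (simp add: shapes_def)
    ultimately have ?thesis by (rule bexI) }
  ultimately show ?thesis using m by blast
qed

lemma ok_tr: "ok (tr x p) (tr x q) = ok p q"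
  by (simp add: ok_def tr_def)

lemma closure: assumes "sh \<in> set shapes"
  shows "ok (up t b sh ! 0) (up t b sh ! 1) \<and> ok (up t b sh ! 1) (up t b sh ! 2)"
proof -
  have "sh = [(0,-2),(-1,-1)] \<or> sh = [(0,0),(-1,-1)] \<or> sh = [(0,0),(-1,1)] \<or> sh = [(0,0),(1,-1)] \<or> sh = [(0,0),(1,1)] \<or> sh = [(0,2),(1,1)]"
    using assms by (simp add: shapes_def)
  thus ?thesis by (cases t; cases b; elim disjE; simp add: H2_def Ho_def sg_def ok_def)
qed

lemma inv: "ok (H t n) (H t (n+1))"
proof (induction n rule: less_induct)
  case (less n)
  show ?case
  proof (cases "n = 0")
    case True thus ?thesis by (simp add: H_0 H_Suc0 ok_def)
  next
    case False
    define k where "k = n div 2"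
    have kl: "k < n" using False k_def by simp
    from ok_shape[OF less[OF kl]] obtain sh where sh: "sh \<in> set shapes"
      "[H t k, H t (k+1)] = map (tr (fst (H t k))) sh" by (elim bexE) metis
    have w: "map (H t) [2*k..<2*k+2*1+1] = up t (odd k) (map (H t) [k..<k+1+1])"
      by (rule win)
    have e1: "[k..<k+1+1] = [k, k+1]" by (simp add: upt_conv_Cons)
    have e2: "[2*k..<2*k+2*1+1] = [2*k, 2*k+1, 2*k+2]" by (simp add: upt_conv_Cons)
    have w2: "[H t (2*k), H t (2*k+1), H t (2*k+2)] = map (tr (fst (H t k))) (up t (odd k) sh)"
    proof -
      have w': "[H t (2*k), H t (2*k+1), H t (2*k+2)] = up t (odd k) [H t k, H t (k+1)]"
        using w unfolding e1 e2 by (simp only: list.map)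
      show ?thesis using w' unfolding sh(2) up_tr .
    qed
    define u where "u = up t (odd k) sh"
    have lu: "length u = 3" using sh(1) unfolding u_def by (auto simp: shapes_def)
    have h0: "H t (2*k) = tr (fst (H t k)) (u ! 0)" using w2 lu unfolding u_def[symmetric]
      by (cases u rule: list.exhaust; simp)
    have h1: "H t (2*k+1) = tr (fst (H t k)) (u ! 1)" using w2 lu unfolding u_def[symmetric]
      by (auto simp: length_Suc_conv)
    have h2: "H t (2*k+2) = tr (fst (H t k)) (u ! 2)" using w2 lu unfolding u_def[symmetric]
      by (auto simp: length_Suc_conv)
    have "ok (H t (2*k)) (H t (2*k+1)) \<and> ok (H t (2*k+1)) (H t (2*k+2))"
      unfolding h0 h1 h2 ok_tr u_def using closure[OF sh(1)] by blast
    moreover have "n = 2*k \<or> n = 2*k+1" using k_def by presburger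
    ultimately show ?thesis by (auto simp: add.assoc)
  qed
qed

definition mx :: "int \<times> int \<Rightarrow> int" where "mx p = max (fst p) (snd p)"
definition Gt :: "bool \<Rightarrow> nat \<Rightarrow> int" where "Gt t m = mx (H t m)"

lemma mx_tr: "mx (tr x p) = x + mx p"
  by (simp add: mx_def tr_def max_add_distrib_right)

lemma win_nth:
  assumes "map (H t) [a..<a+L] = map (tr x) U" "c < L"
  shows "Gt t (a + c) = x + mx (U ! c)"
proof -
  have "length U = L" using arg_cong[OF assms(1), of length] by simp
  hence "map (H t) [a..<a+L] ! c = map (tr x) U ! c" using assms(1) by simp
  hence "H t (a + c) = tr x (U ! c)" using assms(2) \<open>length U = L\<close> by simp
  thus ?thesis by (simp add: Gt_def mx_tr)
qed


lemma up_tab: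
  "up False False [(-1,1),(0,0),(-1,-1)] = [(1,1),(2,0),(1,1),(0,0),(-1,-1)]"
  "up False False [(0,-2),(-1,-1)] = [(0,0),(-1,-1),(0,0)]"
  "up False False [(0,0),(-1,-1),(0,0)] = [(0,0),(1,-1),(0,0),(-1,1),(0,0)]"
  "up False False [(0,0),(-1,-1)] = [(0,0),(1,-1),(0,0)]"
  "up False False [(0,0),(-1,1)] = [(0,0),(1,1),(2,0)]"
  "up False False [(0,0),(1,-1),(0,0),(-1,1),(0,0)] = [(0,0),(1,1),(0,2),(1,1),(0,0),(1,1),(2,0),(1,1),(0,0)]"
  "up False False [(0,0),(1,-1),(0,0)] = [(0,0),(1,1),(0,2),(1,1),(0,0)]"
  "up False False [(0,0),(1,-1)] = [(0,0),(1,1),(0,2)]"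
  "up False False [(0,0),(1,1),(0,2),(1,1),(0,0),(1,1),(2,0),(1,1),(0,0)] = [(0,0),(1,1),(2,2),(1,1),(2,2),(3,1),(2,2),(1,1),(0,0),(1,1),(2,2),(1,3),(2,2),(1,1),(2,2),(1,1),(0,0)]"
  "up False False [(0,0),(1,1),(0,2),(1,1),(0,0)] = [(0,0),(1,1),(2,2),(1,1),(2,2),(3,1),(2,2),(1,1),(0,0)]"
  "up False False [(0,0),(1,1),(0,2)] = [(0,0),(1,1),(2,2),(1,1),(2,2)]"
  "up False False [(0,0),(1,1),(2,0)] = [(0,0),(1,1),(2,2),(1,3),(2,2)]"
  "up False False [(0,0),(1,1),(2,2),(1,1),(2,2),(3,1),(2,2),(1,1),(0,0)] = [(0,0),(1,1),(2,2),(1,3),(2,2),(3,1),(2,2),(1,3),(2,2),(3,3),(2,4),(3,3),(2,2),(3,1),(2,2),(1,1),(0,0)]"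
  "up False False [(0,0),(1,1),(2,2),(1,1),(2,2)] = [(0,0),(1,1),(2,2),(1,3),(2,2),(3,1),(2,2),(1,3),(2,2)]"
  "up False False [(0,0),(1,1),(2,2),(1,3),(2,2),(3,1),(2,2),(1,3),(2,2)] = [(0,0),(1,1),(2,2),(1,3),(2,2),(3,3),(4,2),(3,3),(2,2),(3,3),(2,4),(3,3),(2,2),(3,3),(4,2),(3,3),(2,2)]"
  "up False False [(0,0),(1,1),(2,2),(1,3),(2,2),(3,3),(4,2),(3,3),(2,2)] = [(0,0),(1,1),(2,2),(1,3),(2,2),(3,3),(4,2),(3,3),(2,2),(3,3),(4,4),(3,5),(4,4),(3,3),(4,4),(3,3),(2,2)]"
  "up False False [(0,0),(1,1),(2,2),(1,3),(2,2)] = [(0,0),(1,1),(2,2),(1,3),(2,2),(3,3),(4,2),(3,3),(2,2)]"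
  "up False False [(0,0),(1,1),(2,2)] = [(0,0),(1,1),(2,2),(1,3),(2,2)]"
  "up False False [(0,0),(1,1)] = [(0,0),(1,1),(2,2)]"
  "up False False [(0,2),(1,1)] = [(2,2),(3,1),(2,2)]"
  "up False False [(1,1),(0,0),(-1,-1)] = [(1,1),(2,0),(1,1),(0,0),(-1,-1)]"
  "up False False [(1,1),(0,0),(1,1)] = [(1,1),(2,0),(1,1),(0,2),(1,1)]"
  "up False False [(1,1),(0,2),(1,1)] = [(1,1),(2,2),(3,1),(2,2),(1,1)]"
  "up False False [(1,1),(2,0),(1,1),(0,0),(-1,-1)] = [(1,1),(2,2),(1,3),(2,2),(1,1),(2,0),(1,1),(0,0),(-1,-1)]"
  "up False False [(1,1),(2,0),(1,1),(0,2),(1,1)] = [(1,1),(2,2),(1,3),(2,2),(1,1),(2,2),(3,1),(2,2),(1,1)]"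
  "up False False [(1,1),(2,2),(1,3),(2,2),(1,1),(2,0),(1,1),(0,0),(-1,-1)] = [(1,1),(2,2),(3,3),(2,2),(3,3),(4,2),(3,3),(2,2),(1,1),(2,2),(1,3),(2,2),(1,1),(2,0),(1,1),(0,0),(-1,-1)]"
  "up False False [(1,1),(2,2),(1,3),(2,2),(1,1),(2,2),(3,1),(2,2),(1,1)] = [(1,1),(2,2),(3,3),(2,2),(3,3),(4,2),(3,3),(2,2),(1,1),(2,2),(3,3),(2,4),(3,3),(2,2),(3,3),(2,2),(1,1)]"
  "up False False [(1,1),(2,2),(3,1),(2,2),(1,1)] = [(1,1),(2,2),(3,3),(2,4),(3,3),(2,2),(3,3),(2,2),(1,1)]"
  "up False False [(1,1),(2,2),(3,3),(2,4),(3,3),(2,2),(3,3),(2,2),(1,1)] = [(1,1),(2,2),(3,3),(2,4),(3,3),(4,4),(5,3),(4,4),(3,3),(4,2),(3,3),(2,4),(3,3),(4,2),(3,3),(2,2),(1,1)]"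
  "up False False [(2,2),(3,1),(2,2)] = [(2,2),(3,3),(2,4),(3,3),(2,2)]"
  "up False False [(2,2),(3,3),(2,4),(3,3),(2,2)] = [(2,2),(3,3),(4,4),(3,3),(4,4),(5,3),(4,4),(3,3),(2,2)]"
  "up False False [(2,2),(3,3),(4,4),(3,3),(4,4),(5,3),(4,4),(3,3),(2,2)] = [(2,2),(3,3),(4,4),(3,5),(4,4),(5,3),(4,4),(3,5),(4,4),(5,5),(4,6),(5,5),(4,4),(5,3),(4,4),(3,3),(2,2)]"
  "up False False [(3,1),(2,2),(1,1)] = [(3,3),(2,2),(3,3),(2,2),(1,1)]"
  "up False False [(3,3),(2,2),(3,3),(2,2),(1,1)] = [(3,3),(4,2),(3,3),(2,4),(3,3),(4,2),(3,3),(2,2),(1,1)]"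
  "up False False [(3,3),(4,2),(3,3),(2,4),(3,3),(4,2),(3,3),(2,2),(1,1)] = [(3,3),(4,4),(3,5),(4,4),(3,3),(4,4),(5,3),(4,4),(3,3),(4,4),(3,5),(4,4),(3,3),(4,2),(3,3),(2,2),(1,1)]"
  "up False True [(0,-2),(-1,-1)] = [(-1,1),(0,0),(-1,-1)]"
  "up False True [(0,0),(-1,-1)] = [(1,1),(0,0),(-1,-1)]"
  "up False True [(0,0),(-1,1)] = [(1,1),(0,0),(1,1)]"
  "up False True [(0,0),(1,-1)] = [(1,1),(0,2),(1,1)]"
  "up False True [(0,0),(1,1)] = [(1,1),(0,2),(1,1)]"
  "up False True [(0,2),(1,1)] = [(3,1),(2,2),(1,1)]"
  "up True False [(0,-2),(-1,-1)] = [(0,0),(1,-1),(0,0)]"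
  "up True False [(0,0),(-1,-1)] = [(0,0),(1,-1),(0,0)]"
  "up True False [(0,0),(-1,1)] = [(0,0),(1,1),(0,2)]"
  "up True False [(0,0),(1,-1),(0,0)] = [(0,0),(1,1),(2,0),(1,1),(0,0)]"
  "up True False [(0,0),(1,-1)] = [(0,0),(1,1),(2,0)]"
  "up True False [(0,0),(1,1),(0,2)] = [(0,0),(1,1),(2,2),(1,3),(2,2)]"
  "up True False [(0,0),(1,1),(2,0),(1,1),(0,0)] = [(0,0),(1,1),(2,2),(1,1),(2,2),(3,1),(2,2),(1,1),(0,0)]"
  "up True False [(0,0),(1,1),(2,0)] = [(0,0),(1,1),(2,2),(1,1),(2,2)]"
  "up True False [(0,0),(1,1),(2,2),(1,1),(2,2),(3,1),(2,2),(1,1),(0,0)] = [(0,0),(1,1),(2,2),(1,3),(2,2),(3,1),(2,2),(1,3),(2,2),(3,3),(4,2),(3,3),(2,2),(3,1),(2,2),(1,1),(0,0)]"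
  "up True False [(0,0),(1,1),(2,2),(1,1),(2,2)] = [(0,0),(1,1),(2,2),(1,3),(2,2),(3,1),(2,2),(1,3),(2,2)]"
  "up True False [(0,0),(1,1),(2,2),(1,3),(2,2),(3,1),(2,2),(1,3),(2,2)] = [(0,0),(1,1),(2,2),(1,3),(2,2),(3,3),(2,4),(3,3),(2,2),(3,3),(4,2),(3,3),(2,2),(3,3),(2,4),(3,3),(2,2)]"
  "up True False [(0,0),(1,1),(2,2),(1,3),(2,2),(3,3),(2,4),(3,3),(2,2)] = [(0,0),(1,1),(2,2),(1,3),(2,2),(3,3),(2,4),(3,3),(2,2),(3,3),(4,4),(3,5),(4,4),(3,3),(4,4),(3,3),(2,2)]"
  "up True False [(0,0),(1,1),(2,2),(1,3),(2,2)] = [(0,0),(1,1),(2,2),(1,3),(2,2),(3,3),(2,4),(3,3),(2,2)]"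
  "up True False [(0,0),(1,1),(2,2)] = [(0,0),(1,1),(2,2),(1,3),(2,2)]"
  "up True False [(0,0),(1,1)] = [(0,0),(1,1),(2,2)]"
  "up True False [(0,2),(1,1)] = [(2,2),(1,1),(2,2)]"
  "up True False [(1,-1),(0,0),(-1,-1)] = [(1,1),(2,0),(1,1),(0,0),(-1,-1)]"
  "up True False [(1,1),(0,0),(-1,-1)] = [(1,1),(2,0),(1,1),(0,0),(-1,-1)]"
  "up True False [(1,1),(0,0),(1,1)] = [(1,1),(2,0),(1,1),(0,2),(1,1)]"
  "up True False [(1,1),(0,2),(1,1)] = [(1,1),(2,2),(1,3),(2,2),(1,1)]"
  "up True False [(1,1),(2,0),(1,1),(0,0),(-1,-1)] = [(1,1),(2,2),(3,1),(2,2),(1,1),(2,0),(1,1),(0,0),(-1,-1)]"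
  "up True False [(1,1),(2,0),(1,1),(0,2),(1,1)] = [(1,1),(2,2),(3,1),(2,2),(1,1),(2,2),(1,3),(2,2),(1,1)]"
  "up True False [(1,1),(2,2),(1,3),(2,2),(1,1)] = [(1,1),(2,2),(3,3),(2,4),(3,3),(2,2),(3,3),(2,2),(1,1)]"
  "up True False [(1,1),(2,2),(3,1),(2,2),(1,1),(2,0),(1,1),(0,0),(-1,-1)] = [(1,1),(2,2),(3,3),(2,2),(3,3),(4,2),(3,3),(2,2),(1,1),(2,2),(3,1),(2,2),(1,1),(2,0),(1,1),(0,0),(-1,-1)]"
  "up True False [(1,1),(2,2),(3,1),(2,2),(1,1),(2,2),(1,3),(2,2),(1,1)] = [(1,1),(2,2),(3,3),(2,2),(3,3),(4,2),(3,3),(2,2),(1,1),(2,2),(3,3),(2,4),(3,3),(2,2),(3,3),(2,2),(1,1)]"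
  "up True False [(1,1),(2,2),(3,3),(2,4),(3,3),(2,2),(3,3),(2,2),(1,1)] = [(1,1),(2,2),(3,3),(2,4),(3,3),(4,4),(3,5),(4,4),(3,3),(4,2),(3,3),(2,4),(3,3),(4,2),(3,3),(2,2),(1,1)]"
  "up True False [(1,3),(2,2),(1,1)] = [(3,3),(2,2),(3,3),(2,2),(1,1)]"
  "up True False [(2,2),(1,1),(2,2)] = [(2,2),(3,1),(2,2),(1,3),(2,2)]"
  "up True False [(2,2),(3,1),(2,2),(1,3),(2,2)] = [(2,2),(3,3),(4,2),(3,3),(2,2),(3,3),(2,4),(3,3),(2,2)]"
  "up True False [(2,2),(3,3),(4,2),(3,3),(2,2),(3,3),(2,4),(3,3),(2,2)] = [(2,2),(3,3),(4,4),(3,3),(4,4),(5,3),(4,4),(3,3),(2,2),(3,3),(4,4),(3,5),(4,4),(3,3),(4,4),(3,3),(2,2)]"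
  "up True False [(3,3),(2,2),(3,3),(2,2),(1,1)] = [(3,3),(4,2),(3,3),(2,4),(3,3),(4,2),(3,3),(2,2),(1,1)]"
  "up True False [(3,3),(4,2),(3,3),(2,4),(3,3),(4,2),(3,3),(2,2),(1,1)] = [(3,3),(4,4),(5,3),(4,4),(3,3),(4,4),(3,5),(4,4),(3,3),(4,4),(5,3),(4,4),(3,3),(4,2),(3,3),(2,2),(1,1)]"
  "up True True [(0,-2),(-1,-1)] = [(1,-1),(0,0),(-1,-1)]"
  "up True True [(0,0),(-1,-1)] = [(1,1),(0,0),(-1,-1)]"
  "up True True [(0,0),(-1,1)] = [(1,1),(0,2),(1,1)]"
  "up True True [(0,0),(1,-1)] = [(1,1),(0,0),(1,1)]"
  "up True True [(0,0),(1,1)] = [(1,1),(0,2),(1,1)]"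
  "up True True [(0,2),(1,1)] = [(1,3),(2,2),(1,1)]"
  by (simp_all add: H2_def Ho_def sg_def)

lemma rels_conc:
  fixes t b :: bool and sh :: "(int \<times> int) list"
  assumes "sh \<in> set shapes"
  defines "U2 \<equiv> up t b sh"
  defines "U4 \<equiv> up t False U2"
  defines "U8 \<equiv> up t False U4"
  defines "U16 \<equiv> up t False U8"
  shows "mx (U4!0) = mx (U2!0) \<and> mx (U4!2) = mx (U2!1) + 1 \<and> mx (U16!1) = mx (U8!1)
   \<and> mx (U16!3) = mx (U2!1) + 2 \<and> mx (U16!7) = mx (U2!1) + 2
   \<and> mx (U16!9) = mx (U2!1) + 2 \<and> mx (U16!13) = mx (U2!1) + 2
   \<and> mx (U16!5) = mx (U4!1) + 2 \<and> mx (U16!11) = mx (U4!3) + 2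
   \<and> mx (U16!15) = mx (U2!2) + 1"
proof -
  have "sh = [(0,-2),(-1,-1)] \<or> sh = [(0,0),(-1,-1)] \<or> sh = [(0,0),(-1,1)] \<or> sh = [(0,0),(1,-1)] \<or> sh = [(0,0),(1,1)] \<or> sh = [(0,2),(1,1)]"
    using assms(1) by (simp add: shapes_def)
  thus ?thesis unfolding U16_def U8_def U4_def U2_def
    by (cases t; cases b; elim disjE; simp add: up_tab mx_def del: up.simps)
qed

lemma rels:
  "Gt t (4*n) = Gt t (2*n) \<and> Gt t (4*n+2) = Gt t (2*n+1) + 1 \<and> Gt t (16*n+1) = Gt t (8*n+1)
   \<and> Gt t (16*n+3) = Gt t (2*n+1) + 2 \<and> Gt t (16*n+7) = Gt t (2*n+1) + 2
   \<and> Gt t (16*n+9) = Gt t (2*n+1) + 2 \<and> Gt t (16*n+13) = Gt t (2*n+1) + 2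
   \<and> Gt t (16*n+5) = Gt t (4*n+1) + 2 \<and> Gt t (16*n+11) = Gt t (4*n+3) + 2
   \<and> Gt t (16*n+15) = Gt t (2*n+2) + 1"
proof -
  define x where "x = fst (H t n)"
  obtain sh where sh: "sh \<in> set shapes" "[H t n, H t (n+1)] = map (tr x) sh"
    using ok_shape[OF inv[of t n]] unfolding x_def by (elim bexE) metis
  define U2 where "U2 = up t (odd n) sh"
  define U4 where "U4 = up t False U2"
  define U8 where "U8 = up t False U4"
  define U16 where "U16 = up t False U8"
  have w1: "map (H t) [n..<n+1+1] = map (tr x) sh"
    using sh(2) by (simp add: upt_conv_Cons)
  have w2: "map (H t) [2*n..<2*n+3] = map (tr x) U2"
    using win[of t n 1] unfolding w1 U2_def up_tr by (simp add: numeral_eq_Suc)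
  have w4: "map (H t) [4*n..<4*n+5] = map (tr x) U4"
  proof -
    have "map (H t) [2*(2*n)..<2*(2*n)+2*2+1] = up t (odd (2*n)) (map (H t) [2*n..<2*n+2+1])"
      by (rule win)
    moreover have "2*(2*n) = 4*n" "4*n+2*2+1 = 4*n+5" "2*n+2+1 = 2*n+3" "odd (2*n) = False" by simp_all
    ultimately have "map (H t) [4*n..<4*n+5] = up t False (map (H t) [2*n..<2*n+3])"
      by (simp only:)
    thus ?thesis unfolding U4_def w2 up_tr .
  qed
  have w8: "map (H t) [8*n..<8*n+9] = map (tr x) U8"
  proof -
    have "map (H t) [2*(4*n)..<2*(4*n)+2*4+1] = up t (odd (4*n)) (map (H t) [4*n..<4*n+4+1])"
      by (rule win)
    moreover have "2*(4*n) = 8*n" "8*n+2*4+1 = 8*n+9" "4*n+4+1 = 4*n+5" "odd (4*n) = False" by simp_all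
    ultimately have "map (H t) [8*n..<8*n+9] = up t False (map (H t) [4*n..<4*n+5])"
      by (simp only:)
    thus ?thesis unfolding U8_def w4 up_tr .
  qed
  have w16: "map (H t) [16*n..<16*n+17] = map (tr x) U16"
  proof -
    have "map (H t) [2*(8*n)..<2*(8*n)+2*8+1] = up t (odd (8*n)) (map (H t) [8*n..<8*n+8+1])"
      by (rule win)
    moreover have "2*(8*n) = 16*n" "16*n+2*8+1 = 16*n+17" "8*n+8+1 = 8*n+9" "odd (8*n) = False" by simp_all
    ultimately have "map (H t) [16*n..<16*n+17] = up t False (map (H t) [8*n..<8*n+9])"
      by (simp only:)
    thus ?thesis unfolding U16_def w8 up_tr .
  qed
  note g2 = win_nth[OF w2] and g4 = win_nth[OF w4] and g8 = win_nth[OF w8] and g16 = win_nth[OF w16]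
  have e: "Gt t (4*n) = x + mx (U4!0)" "Gt t (2*n) = x + mx (U2!0)"
    "Gt t (4*n+2) = x + mx (U4!2)" "Gt t (2*n+1) = x + mx (U2!1)"
    "Gt t (16*n+1) = x + mx (U16!1)" "Gt t (8*n+1) = x + mx (U8!1)"
    "Gt t (16*n+3) = x + mx (U16!3)" "Gt t (16*n+7) = x + mx (U16!7)"
    "Gt t (16*n+9) = x + mx (U16!9)" "Gt t (16*n+13) = x + mx (U16!13)"
    "Gt t (16*n+5) = x + mx (U16!5)" "Gt t (4*n+1) = x + mx (U4!1)"
    "Gt t (16*n+11) = x + mx (U16!11)" "Gt t (4*n+3) = x + mx (U4!3)"
    "Gt t (16*n+15) = x + mx (U16!15)" "Gt t (2*n+2) = x + mx (U2!2)"
    using g2[of 0] g2[of 1] g2[of 2] g4[of 0] g4[of 1] g4[of 2] g4[of 3] g8[of 1]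
      g16[of 1] g16[of 3] g16[of 5] g16[of 7] g16[of 9] g16[of 11] g16[of 13] g16[of 15]
    by simp_all
  show ?thesis unfolding e using rels_conc[OF sh(1), of t "odd n"] unfolding U16_def U8_def U4_def U2_def
    by linarith
qed

declare oddpart.simps[simp del]

lemma oddpart_double: "oddpart (2*n) = oddpart n"
proof (cases "n = 0")
  case True thus ?thesis by simp
next
  case False thus ?thesis by (subst oddpart.simps) simp
qed

lemma oddpart_odd: "odd n \<Longrightarrow> oddpart n = n"
  by (subst oddpart.simps) auto

definition g :: "nat \<Rightarrow> int" where "g j = 1 - 2 * int (pf j)"

lemma pf01: "pf j = 0 \<or> pf j = 1" by (simp add: pf_def)

lemma g_double: "g (2*n) = g n" by (simp add: g_def pf_def oddpart_double)

lemma g_odd: "g (2*x+1) = (if even x then 1 else -1)"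
proof (cases "even x")
  case True
  then obtain y where "x = 2*y" by blast
  hence "oddpart (2*x+1) mod 4 = 1" by (simp add: oddpart_odd)
  thus ?thesis using True by (simp add: g_def pf_def)
next
  case False
  then obtain y where "x = 2*y+1" using oddE by blast
  hence "oddpart (2*x+1) mod 4 = 3" by (simp add: oddpart_odd)
  thus ?thesis using False by (simp add: g_def pf_def)
qed

fun P :: "nat \<Rightarrow> int" where
  "P 0 = 0"
| "P (Suc x) = P x + g (Suc x)"

lemma P_double: "P (2*x) = P x + (if odd x then 1 else 0) \<and> P (2*x+1) = P x + (if even x then 1 else 0)"
proof (induction x)
  case 0
  have "g 1 = 1" using g_odd[of 0] by simp
  thus ?case by simp
next
  case (Suc x)
  have e1: "2 * Suc x = Suc (2*x+1)" by simp
  have a: "P (2 * Suc x) = P (2*x+1) + g (2*(Suc x))"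
    unfolding e1 by (simp only: P.simps)
  have b: "P (2 * Suc x + 1) = P (2 * Suc x) + g (2 * Suc x + 1)" by simp
  have c: "P (Suc x) = P x + g (Suc x)" by simp
  have d: "g (2*Suc x) = g (Suc x)" by (rule g_double)
  have f: "g (2*Suc x+1) = (if even (Suc x) then 1 else -1)" by (rule g_odd)
  have IH: "P (2*x+1) = P x + (if even x then 1 else 0)" using Suc.IH by blast
  show ?case
  proof (cases "even x")
    case True
    hence "odd (Suc x)" by simp
    thus ?thesis using True a b c d f IH by simp
  next
    case False
    hence "even (Suc x)" by simp
    thus ?thesis using False a b c d f IH by simp
  qed
qed

lemma P2: "P (2*x) = P x + (if odd x then 1 else 0)" using P_double by blast
lemma P21: "P (2*x+1) = P x + (if even x then 1 else 0)" using P_double by blast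

definition D :: "nat \<Rightarrow> nat \<Rightarrow> int" where "D a m = P (a+m) - P a"

lemma D_ee: "D (2*b) (2*k) = D b k + (if odd (b+k) then 1 else 0) - (if odd b then 1 else 0)"
proof -
  have "2*b+2*k = 2*(b+k)" by simp
  thus ?thesis unfolding D_def by (simp only: P2; simp)
qed
lemma D_oe: "D (2*b+1) (2*k) = D b k + (if even (b+k) then 1 else 0) - (if even b then 1 else 0)"
proof -
  have "2*b+1+2*k = 2*(b+k)+1" by simp
  thus ?thesis unfolding D_def by (simp only: P21; simp)
qed
lemma D_eo: "D (2*b) (2*k+1) = D b k + (if even (b+k) then 1 else 0) - (if odd b then 1 else 0)"
proof -
  have "2*b+(2*k+1) = 2*(b+k)+1" by simp
  thus ?thesis unfolding D_def by (simp only: P2 P21; simp)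
qed
lemma D_oo: "D (2*b+1) (2*k+1) = D b (k+1) + (if odd (b+k+1) then 1 else 0) - (if even b then 1 else 0)"
proof -
  have "2*b+1+(2*k+1) = 2*(b+(k+1))" by simp
  thus ?thesis unfolding D_def by (simp only: P2 P21; simp add: add.assoc)
qed

lemma D_oe': "D (Suc (2*b)) (2*k) = D b k + (if even (b+k) then 1 else 0) - (if even b then 1 else 0)"
  using D_oe by simp
lemma D_eo': "D (2*b) (Suc (2*k)) = D b k + (if even (b+k) then 1 else 0) - (if odd b then 1 else 0)"
  using D_eo by simp
lemma D_oo': "D (Suc (2*b)) (Suc (2*k)) = D b (Suc k) + (if odd (b+k+1) then 1 else 0) - (if even b then 1 else 0)"
  using D_oo by simp

lemma H_odd': "H t (Suc (2*k)) = Ho t (H t k) (H t (Suc k)) (odd k)"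
  using H_odd[of t k] by simp

lemma comb:
  fixes F V :: "nat \<Rightarrow> int" and X Y c0 c1 :: int and r :: nat
  assumes "\<forall>b. even b \<longrightarrow> F b \<le> X" "\<exists>b. even b \<and> F b = X"
    "\<forall>b. odd b \<longrightarrow> F b \<le> Y" "\<exists>b. odd b \<and> F b = Y"
    and r: "r < 2" and V: "\<forall>b. V (2*b+r) = F b + (if even b then c0 else c1)"
  shows "(\<forall>a. a mod 2 = r \<longrightarrow> V a \<le> max (X+c0) (Y+c1)) \<and> (\<exists>a. a mod 2 = r \<and> V a = max (X+c0) (Y+c1))"
proof (intro conjI allI impI)
  fix a assume "a mod 2 = r"
  hence "a = 2*(a div 2) + r" using div_mult_mod_eq[of a 2] by linarith
  hence "V a = F (a div 2) + (if even (a div 2) then c0 else c1)" using V by metis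
  thus "V a \<le> max (X+c0) (Y+c1)" using assms(1,3) by (cases "even (a div 2)") force+
next
  obtain b0 where b0: "even b0" "F b0 = X" using assms(2) by blast
  obtain b1 where b1: "odd b1" "F b1 = Y" using assms(4) by blast
  have m0: "(2*b0+r) mod 2 = r" "(2*b1+r) mod 2 = r" using r by simp_all
  show "\<exists>a. a mod 2 = r \<and> V a = max (X+c0) (Y+c1)"
  proof (cases "X+c0 \<ge> Y+c1")
    case True thus ?thesis using m0(1) V b0 by (intro exI[of _ "2*b0+r"]) auto
  next
    case False thus ?thesis using m0(2) V b1 by (intro exI[of _ "2*b1+r"]) auto
  qed
qed

lemma g_pm: "g j = 1 \<or> g j = -1" using pf01[of j] by (auto simp: g_def)

lemma g1: "g 1 = 1" using g_odd[of 0] by simp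
lemma g2: "g 2 = 1" using g_double[of 1] g1 by simp
lemma g3: "g 3 = -1" using g_odd[of 1] by simp
lemma g6: "g 6 = -1" using g_double[of 3] g3 by simp
lemma g1': "g (Suc 0) = 1" using g1 by simp
lemma g2': "g (Suc (Suc 0)) = 1" using g2 by (simp add: numeral_eq_Suc)

lemma D1: "D a 1 = g (a+1)" by (simp add: D_def)
lemma D0: "D a 0 = 0" by (simp add: D_def)
lemma D1': "D a (Suc 0) = g (Suc a)" by (simp add: D_def)

lemma sg_sq: "sg t * sg t = 1" by (simp add: sg_def)

lemma corr: "(\<forall>a. even a \<longrightarrow> sg t * D a m \<le> fst (H t m)) \<and> (\<exists>a. even a \<and> sg t * D a m = fst (H t m))
   \<and> (\<forall>a. odd a \<longrightarrow> sg t * D a m \<le> snd (H t m)) \<and> (\<exists>a. odd a \<and> sg t * D a m = snd (H t m))"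
proof (induction m rule: less_induct)
  case (less m)
  consider "m = 0" | "m = 1" | k where "m = 2*k" "k \<ge> 1" | k where "m = 2*k+1" "k \<ge> 1"
  proof -
    have "m = 0 \<or> m = 1 \<or> (\<exists>k. m = 2*k \<and> k \<ge> 1) \<or> (\<exists>k. m = 2*k+1 \<and> k \<ge> 1)" by presburger
    thus ?thesis using that by blast
  qed
  then show ?case
  proof cases
    case 1
    thus ?thesis by (auto simp: H_0 D0 intro: exI[of _ 0] exI[of _ 1])
  next
    case 2
    have ub: "sg t * D a 1 \<le> 1" for a using g_pm[of "a+1"] by (auto simp: D1 D1' sg_def)
    show ?thesis
    proof (cases t)
      case True
      have "even (0::nat) \<and> sg t * D 0 1 = 1" "odd (1::nat) \<and> sg t * D 1 1 = 1"
        using True by (simp_all add: D1 D1' g1 g2 g1' g2' sg_def)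
      thus ?thesis unfolding 2 H_1 fst_conv snd_conv using ub by blast
    next
      case False
      have "even (2::nat) \<and> sg t * D 2 1 = 1" "odd (5::nat) \<and> sg t * D 5 1 = 1"
        using False by (simp_all add: D1 D1' g3 g6 sg_def)
      thus ?thesis unfolding 2 H_1 fst_conv snd_conv using ub by blast
    qed
  next
    case 3
    have kl: "k < m" using 3 by simp
    note IH = less[OF kl]
    define F where "F b = sg t * D b k" for b
    have IH': "\<forall>b. even b \<longrightarrow> F b \<le> fst (H t k)" "\<exists>b. even b \<and> F b = fst (H t k)"
      "\<forall>b. odd b \<longrightarrow> F b \<le> snd (H t k)" "\<exists>b. odd b \<and> F b = snd (H t k)"
      using IH unfolding F_def by blast+
    show ?thesis
    proof (cases "odd k")
      case True
      have V0: "\<forall>b. sg t * D (2*b+0) m = F b + (if even b then sg t else - sg t)"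
        using True unfolding 3 F_def by (auto simp: D_ee ring_distribs)
      have V1: "\<forall>b. sg t * D (2*b+1) m = F b + (if even b then - sg t else sg t)"
        using True unfolding 3 F_def by (auto simp: D_oe D_oe' ring_distribs)
      have h: "H t m = (max (fst (H t k) + sg t) (snd (H t k) - sg t), max (fst (H t k) - sg t) (snd (H t k) + sg t))"
        using True unfolding 3 by (simp add: H_even H2_def)
      note c0 = comb[OF IH', of 0 "\<lambda>a. sg t * D a m", OF _ V0]
      note c1 = comb[OF IH', of 1 "\<lambda>a. sg t * D a m", OF _ V1]
      show ?thesis using c0 c1 unfolding h by (simp add: even_iff_mod_2_eq_zero odd_iff_mod_2_eq_one)
    next
      case False
      have V0: "\<forall>b. sg t * D (2*b+0) m = F b + (if even b then 0 else 0)"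
        using False unfolding 3 F_def by (auto simp: D_ee ring_distribs)
      have V1: "\<forall>b. sg t * D (2*b+1) m = F b + (if even b then 0 else 0)"
        using False unfolding 3 F_def by (auto simp: D_oe D_oe' ring_distribs)
      have h: "H t m = (max (fst (H t k) + 0) (snd (H t k) + 0), max (fst (H t k) + 0) (snd (H t k) + 0))"
        using False unfolding 3 by (simp add: H_even H2_def)
      note c0 = comb[OF IH', of 0 "\<lambda>a. sg t * D a m", OF _ V0]
      note c1 = comb[OF IH', of 1 "\<lambda>a. sg t * D a m", OF _ V1]
      show ?thesis using c0 c1 unfolding h by (simp add: even_iff_mod_2_eq_zero odd_iff_mod_2_eq_one)
    qed
  next
    case 4
    have kl: "k < m" "k+1 < m" using 4 by simp_all
    note IHa = less[OF kl(1)] and IHb = less[OF kl(2)]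
    define F where "F b = sg t * D b k" for b
    define F2 where "F2 b = sg t * D b (k+1)" for b
    have IH': "\<forall>b. even b \<longrightarrow> F b \<le> fst (H t k)" "\<exists>b. even b \<and> F b = fst (H t k)"
      "\<forall>b. odd b \<longrightarrow> F b \<le> snd (H t k)" "\<exists>b. odd b \<and> F b = snd (H t k)"
      using IHa unfolding F_def by blast+
    have IH2: "\<forall>b. even b \<longrightarrow> F2 b \<le> fst (H t (k+1))" "\<exists>b. even b \<and> F2 b = fst (H t (k+1))"
      "\<forall>b. odd b \<longrightarrow> F2 b \<le> snd (H t (k+1))" "\<exists>b. odd b \<and> F2 b = snd (H t (k+1))"
      using IHb unfolding F2_def by blast+
    show ?thesis
    proof (cases "odd k")
      case True
      have V0: "\<forall>b. sg t * D (2*b+0) m = F b + (if even b then 0 else 0)"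
        using True unfolding 4 F_def by (auto simp: D_eo D_eo' ring_distribs)
      have V1: "\<forall>b. sg t * D (2*b+1) m = F2 b + (if even b then - sg t else sg t)"
        using True unfolding 4 F2_def by (auto simp: D_oo D_oo' ring_distribs)
      have h: "H t m = (max (fst (H t k) + 0) (snd (H t k) + 0), max (fst (H t (k+1)) + - sg t) (snd (H t (k+1)) + sg t))"
        using True unfolding 4 by (simp add: H_odd H_odd' Ho_def)
      note c0 = comb[OF IH', of 0 "\<lambda>a. sg t * D a m", OF _ V0]
      note c1 = comb[OF IH2, of 1 "\<lambda>a. sg t * D a m", OF _ V1]
      show ?thesis using c0 c1 unfolding h by (simp add: even_iff_mod_2_eq_zero odd_iff_mod_2_eq_one)
    next
      case False
      have V0: "\<forall>b. sg t * D (2*b+0) m = F b + (if even b then sg t else - sg t)"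
        using False unfolding 4 F_def by (auto simp: D_eo D_eo' ring_distribs)
      have V1: "\<forall>b. sg t * D (2*b+1) m = F2 b + (if even b then 0 else 0)"
        using False unfolding 4 F2_def by (auto simp: D_oo D_oo' ring_distribs)
      have h: "H t m = (max (fst (H t k) + sg t) (snd (H t k) + - sg t), max (fst (H t (k+1)) + 0) (snd (H t (k+1)) + 0))"
        using False unfolding 4 by (simp add: H_odd H_odd' Ho_def)
      note c0 = comb[OF IH', of 0 "\<lambda>a. sg t * D a m", OF _ V0]
      note c1 = comb[OF IH2, of 1 "\<lambda>a. sg t * D a m", OF _ V1]
      show ?thesis using c0 c1 unfolding h by (simp add: even_iff_mod_2_eq_zero odd_iff_mod_2_eq_one)
    qed
  qed
qed

lemma P_par: "even (P x - int x)"
proof (induction x)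
  case 0 thus ?case by simp
next
  case (Suc x)
  have "P (Suc x) - int (Suc x) = (P x - int x) + (g (Suc x) - 1)" by simp
  moreover have "even (g (Suc x) - 1)" using g_pm[of "Suc x"] by auto
  ultimately show ?case using Suc by simp
qed

lemma D_par: "even (D a m - int m)"
proof -
  have h: "D a m - int m = (P (a+m) - int (a+m)) - (P a - int a)" by (simp add: D_def)
  show ?thesis unfolding h by (rule dvd_diff[OF P_par P_par])
qed

lemma D_step: "\<bar>D (Suc a) m - D a m\<bar> \<le> 2"
proof -
  have "D (Suc a) m - D a m = g (Suc (a+m)) - g (Suc a)" by (simp add: D_def)
  thus ?thesis using g_pm[of "Suc (a+m)"] g_pm[of "Suc a"] by auto
qed

lemma ivt:
  fixes f :: "nat \<Rightarrow> int"
  assumes step: "\<And>i. \<bar>f (Suc i) - f i\<bar> \<le> 2" and par: "\<And>i. even (f i - c)"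
    and ij: "i \<le> j"
  shows "\<forall>v. even (v - c) \<longrightarrow> min (f i) (f j) \<le> v \<longrightarrow> v \<le> max (f i) (f j) \<longrightarrow> (\<exists>k. f k = v)"
  using ij
proof (induction j rule: dec_induct)
  case base
  then show ?case by auto
next
  case (step n)
  show ?case
  proof (intro allI impI)
    fix v assume v: "even (v - c)" "min (f i) (f (Suc n)) \<le> v" "v \<le> max (f i) (f (Suc n))"
    show "\<exists>k. f k = v"
    proof (cases "min (f i) (f n) \<le> v \<and> v \<le> max (f i) (f n)")
      case True thus ?thesis using step.IH v(1) by blast
    next
      case False
      have s: "\<bar>f (Suc n) - f n\<bar> \<le> 2" by (rule assms(1))
      have p1: "even (f n - c)" "even (f (Suc n) - c)" by (rule par)+
      obtain a where a: "v - c = 2*a" using v(1) by blast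
      obtain b where b: "f n - c = 2*b" using p1(1) by blast
      obtain d where d: "f (Suc n) - c = 2*d" using p1(2) by blast
      have "(f n < v \<and> v \<le> f (Suc n)) \<or> (f (Suc n) \<le> v \<and> v < f n)"
        using False v(2,3) unfolding min_def max_def by (auto split: if_splits)
      moreover have "f (Suc n) - f n \<le> 2" "f n - f (Suc n) \<le> 2" using s by auto
      ultimately have "v = f (Suc n)"
      proof (elim disjE conjE)
        assume h: "f n < v" "v \<le> f (Suc n)" "f (Suc n) - f n \<le> 2"
        show ?thesis using h(1,2,3) a b d by presburger
      next
        assume h: "f (Suc n) \<le> v" "v < f n" "f n - f (Suc n) \<le> 2"
        show ?thesis using h(1,2,3) a b d by presburger
      qed
      thus ?thesis by blast
    qed
  qed
qed

lemma D_bounds: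
  "D a m \<le> Gt True m" "- Gt False m \<le> D a m"
  "\<exists>a. D a m = Gt True m" "\<exists>a. D a m = - Gt False m"
proof -
  have c1: "\<forall>a. sg True * D a m \<le> Gt True m" "\<exists>a. sg True * D a m = Gt True m"
    using corr[of True m] unfolding Gt_def mx_def
    by (metis max.coboundedI1 max.coboundedI2 max_def)+
  have c2: "\<forall>a. sg False * D a m \<le> Gt False m" "\<exists>a. sg False * D a m = Gt False m"
    using corr[of False m] unfolding Gt_def mx_def
    by (metis max.coboundedI1 max.coboundedI2 max_def)+
  show "D a m \<le> Gt True m" "- Gt False m \<le> D a m"
    "\<exists>a. D a m = Gt True m" "\<exists>a. D a m = - Gt False m"
  proof -
    have u1: "D a m \<le> Gt True m" for a using c1(1) by (simp add: sg_def)
    have u2: "- D a m \<le> Gt False m" for a using c2(1) by (simp add: sg_def)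
    obtain a1 where a1: "D a1 m = Gt True m" using c1(2) by (auto simp: sg_def)
    obtain a2 where a2: "- D a2 m = Gt False m" using c2(2) by (auto simp: sg_def)
    show "D a m \<le> Gt True m" by (rule u1)
    show "- Gt False m \<le> D a m" using u2[of a] by linarith
    show "\<exists>a. D a m = Gt True m" using a1 by blast
    show "\<exists>a. D a m = - Gt False m" using a2 by (intro exI[of _ a2]) linarith
  qed
qed

lemma even_sub: "even (x - c) \<Longrightarrow> even (y - c) \<Longrightarrow> even (x - (y::int))"
  by presburger

lemma even_add2: "even (x - c) \<Longrightarrow> even (x + 2 * j - (c::int))"
  by presburger

lemma card_V: "card (range (\<lambda>a. D a m)) = nat ((Gt True m + Gt False m) div 2) + 1"
  and S_nonneg: "Gt True m + Gt False m \<ge> 0"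
proof -
  define hi where "hi = Gt True m"
  define lo where "lo = - Gt False m"
  obtain a1 where a1: "D a1 m = hi" using D_bounds(3) hi_def by blast
  obtain a2 where a2: "D a2 m = lo" using D_bounds(4) lo_def by blast
  have le: "lo \<le> hi" using a1 D_bounds(2)[where a=a1 and m=m] lo_def hi_def by simp
  thus "Gt True m + Gt False m \<ge> 0" unfolding hi_def lo_def by simp
  define K where "K = nat ((hi - lo) div 2)"
  have plo: "even (lo - int m)" using D_par[of a2 m] a2 by simp
  have phi: "even (hi - int m)" using D_par[of a1 m] a1 by simp
  have hk: "hi - lo = 2 * int K"
  proof -
    have "even (hi - lo)" using even_sub[OF phi plo] .
    thus ?thesis unfolding K_def using le by auto
  qed
  have eq: "range (\<lambda>a. D a m) = (\<lambda>j. lo + 2 * int j) ` {0..K}"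
  proof
    show "range (\<lambda>a. D a m) \<subseteq> (\<lambda>j. lo + 2 * int j) ` {0..K}"
    proof
      fix v assume "v \<in> range (\<lambda>a. D a m)"
      then obtain a where v: "v = D a m" by blast
      have b: "lo \<le> v" "v \<le> hi" using D_bounds(1,2)[where a=a and m=m] v lo_def hi_def by auto
      have "even (v - lo)" using even_sub[OF D_par[of a m] plo] v by simp
      then obtain j where j: "v - lo = 2 * j" by blast
      have "j \<ge> 0" "j \<le> int K" using b j hk by auto
      hence "v = lo + 2 * int (nat j)" "nat j \<in> {0..K}" using j by auto
      thus "v \<in> (\<lambda>j. lo + 2 * int j) ` {0..K}" by blast
    qed
  next
    show "(\<lambda>j. lo + 2 * int j) ` {0..K} \<subseteq> range (\<lambda>a. D a m)"
    proof
      fix v assume "v \<in> (\<lambda>j. lo + 2 * int j) ` {0..K}"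
      then obtain j where j: "j \<le> K" "v = lo + 2 * int j" by auto
      have pv: "even (v - int m)" using even_add2[OF plo, of "int j"] j(2) by simp
      have bv: "lo \<le> v" "v \<le> hi" using j hk by auto
      have ivt1: "\<forall>v. even (v - int m) \<longrightarrow> min (D i m) (D j' m) \<le> v \<longrightarrow> v \<le> max (D i m) (D j' m) \<longrightarrow> (\<exists>k. D k m = v)"
        if "i \<le> j'" for i j'
        using ivt[of "\<lambda>a. D a m" "int m" i j'] D_step D_par that by blast
      have "\<exists>k. D k m = v"
      proof (cases "a1 \<le> a2")
        case True
        show ?thesis using ivt1[OF True] pv bv a1 a2 by auto
      next
        case False
        hence a21: "a2 \<le> a1" by simp
        show ?thesis using ivt1[OF a21] pv bv a1 a2 by auto
      qed
      thus "v \<in> range (\<lambda>a. D a m)" by (metis rangeI)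
    qed
  qed
  have "inj_on (\<lambda>j. lo + 2 * int j) {0..K}" by (auto simp: inj_on_def)
  hence "card (range (\<lambda>a. D a m)) = card {0..K}" unfolding eq by (rule card_image)
  thus "card (range (\<lambda>a. D a m)) = nat ((Gt True m + Gt False m) div 2) + 1"
    unfolding K_def hi_def lo_def by simp
qed

lemma pf_factors_eq: "pf_factors m = (\<lambda>a. pf_factor (a+1) m) ` UNIV"
proof -
  have "{pf_factor i m | i. i \<ge> 1} = (\<lambda>a. pf_factor (a+1) m) ` UNIV"
  proof (intro equalityI subsetI)
    fix w assume "w \<in> {pf_factor i m | i. i \<ge> 1}"
    then obtain i where "w = pf_factor i m" "i \<ge> 1" by blast
    hence "w = pf_factor ((i-1)+1) m" by simp
    thus "w \<in> (\<lambda>a. pf_factor (a+1) m) ` UNIV" by blast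
  next
    fix w assume "w \<in> (\<lambda>a. pf_factor (a+1) m) ` UNIV"
    thus "w \<in> {pf_factor i m | i. i \<ge> 1}" by auto
  qed
  thus ?thesis by (simp add: pf_factors_def)
qed

lemma Dsum: "D a m = int m - 2 * int (sum_list (pf_factor (a+1) m))"
proof (induction m)
  case 0 thus ?case by (simp add: D_def pf_factor_def)
next
  case (Suc m)
  have l: "pf_factor (a+1) (Suc m) = pf_factor (a+1) m @ [pf (a+1+m)]"
    by (simp add: pf_factor_def)
  have d: "D a (Suc m) = D a m + g (Suc (a+m))" by (simp add: D_def)
  show ?case using Suc d unfolding l by (simp add: g_def)
qed

lemma pf_factor_01: "set (pf_factor i m) \<subseteq> {0,1}"
  by (auto simp: pf_factor_def pf_def)

lemma pf_factor_len: "length (pf_factor i m) = m"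
  by (simp add: pf_factor_def)

lemma cnt01: "set w \<subseteq> {0,1} \<Longrightarrow> count (mset w) (1::nat) = sum_list w \<and> count (mset w) 0 + sum_list w = length w"
  by (induction w) auto

lemma mset_iff:
  assumes "set u \<subseteq> {0,1}" "set v \<subseteq> {0,1::nat}" "length u = length v"
  shows "mset u = mset v \<longleftrightarrow> sum_list u = sum_list v"
proof
  assume "mset u = mset v"
  thus "sum_list u = sum_list v" by (metis sum_mset_sum_list)
next
  assume s: "sum_list u = sum_list v"
  have cu: "count (mset u) 1 = sum_list u" "count (mset u) 0 + sum_list u = length u"
    using cnt01[OF assms(1)] by auto
  have cv: "count (mset v) 1 = sum_list v" "count (mset v) 0 + sum_list v = length v"
    using cnt01[OF assms(2)] by auto
  show "mset u = mset v"
  proof (rule multiset_eqI)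
    fix x
    show "count (mset u) x = count (mset v) x"
    proof (cases "x = 0 \<or> x = 1")
      case True thus ?thesis using cu cv s assms(3) by auto
    next
      case False
      hence "x \<notin> set u" "x \<notin> set v" using assms(1,2) by auto
      thus ?thesis by (metis count_eq_zero_iff set_mset_mset)
    qed
  qed
qed

lemma rho_eq: "rho m = card (range (\<lambda>a. D a m))"
proof -
  define F where "F = pf_factors m"
  have Fp: "w \<in> F \<Longrightarrow> set w \<subseteq> {0,1} \<and> length w = m" for w
    unfolding F_def pf_factors_def using pf_factor_01 pf_factor_len by blast
  define cl where "cl s = {v \<in> F. sum_list v = s}" for s
  have "(\<lambda>w. {v \<in> F. abelian_equiv w v}) ` F = cl ` (sum_list ` F)"
  proof -
    have "{v \<in> F. abelian_equiv w v} = cl (sum_list w)" if "w \<in> F" for w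
      using Fp[OF that] Fp mset_iff unfolding cl_def abelian_equiv_def by fastforce
    hence "(\<lambda>w. {v \<in> F. abelian_equiv w v}) ` F = (\<lambda>w. cl (sum_list w)) ` F"
      by (rule image_cong[OF refl])
    thus ?thesis by (simp add: image_image)
  qed
  moreover have "inj_on cl (sum_list ` F)"
  proof (rule inj_onI)
    fix s1 s2 assume "s1 \<in> sum_list ` F" "s2 \<in> sum_list ` F" "cl s1 = cl s2"
    then obtain w where "w \<in> F" "sum_list w = s1" by blast
    hence "w \<in> cl s1" by (simp add: cl_def)
    hence "w \<in> cl s2" using \<open>cl s1 = cl s2\<close> by simp
    thus "s1 = s2" using \<open>sum_list w = s1\<close> by (simp add: cl_def)
  qed
  ultimately have r1: "rho m = card (sum_list ` F)"
    unfolding rho_def F_def[symmetric] by (simp add: card_image)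
  have "range (\<lambda>a. D a m) = (\<lambda>s. int m - 2 * int s) ` (sum_list ` F)"
    unfolding F_def pf_factors_eq image_image using Dsum by auto
  moreover have "inj_on (\<lambda>s. int m - 2 * int s) (sum_list ` F)" by (auto simp: inj_on_def)
  ultimately have "card (range (\<lambda>a. D a m)) = card (sum_list ` F)" by (simp add: card_image)
  thus ?thesis using r1 by simp
qed

lemma Rrel:
  assumes "Gt True a + Gt False a = Gt True b + Gt False b + 2 * k" "0 \<le> k"
  shows "rho a = rho b + nat k"
proof -
  have R: "rho m = nat ((Gt True m + Gt False m) div 2) + 1" for m using rho_eq card_V by simp
  have N: "0 \<le> Gt True b + Gt False b" by (rule S_nonneg)
  define S where "S = Gt True b + Gt False b"
  have "(S + 2 * k) div 2 = S div 2 + k" by simp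
  moreover have "0 \<le> S div 2" using N S_def by simp
  ultimately have "nat ((S + 2 * k) div 2) = nat (S div 2) + nat k" using assms(2) by (simp add: nat_add_distrib)
  thus ?thesis unfolding R using assms(1) S_def by simp
qed

theorem theorem2:
  fixes n :: nat
  shows "(n \<ge> 1 \<longrightarrow> rho (4*n) = rho (2*n))
    \<and> rho (4*n+2) = rho (2*n+1) + 1
    \<and> rho (16*n+1) = rho (8*n+1)
    \<and> (\<forall>c\<in>{3,7,9,13}. rho (16*n+c) = rho (2*n+1) + 2)
    \<and> rho (16*n+5) = rho (4*n+1) + 2
    \<and> rho (16*n+11) = rho (4*n+3) + 2
    \<and> rho (16*n+15) = rho (2*n+2) + 1"
proof -
  note r1 = rels[of True n] and r2 = rels[of False n]
  have a: "rho (4*n) = rho (2*n)" using Rrel[of "4*n" "2*n" 0] r1 r2 by simp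
  have b: "rho (4*n+2) = rho (2*n+1) + 1" using Rrel[of "4*n+2" "2*n+1" 1] r1 r2 by simp
  have c: "rho (16*n+1) = rho (8*n+1)" using Rrel[of "16*n+1" "8*n+1" 0] r1 r2 by simp
  have d3: "rho (16*n+3) = rho (2*n+1) + 2" using Rrel[of "16*n+3" "2*n+1" 2] r1 r2 by simp
  have d7: "rho (16*n+7) = rho (2*n+1) + 2" using Rrel[of "16*n+7" "2*n+1" 2] r1 r2 by simp
  have d9: "rho (16*n+9) = rho (2*n+1) + 2" using Rrel[of "16*n+9" "2*n+1" 2] r1 r2 by simp
  have d13: "rho (16*n+13) = rho (2*n+1) + 2" using Rrel[of "16*n+13" "2*n+1" 2] r1 r2 by simp
  have e: "rho (16*n+5) = rho (4*n+1) + 2" using Rrel[of "16*n+5" "4*n+1" 2] r1 r2 by simp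
  have f: "rho (16*n+11) = rho (4*n+3) + 2" using Rrel[of "16*n+11" "4*n+3" 2] r1 r2 by simp
  have h: "rho (16*n+15) = rho (2*n+2) + 1" using Rrel[of "16*n+15" "2*n+2" 1] r1 r2 by simp
  show ?thesis using a b c d3 d7 d9 d13 e f h by simp
qed

end
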